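(* Let $\mathbf G$ be a strict quasi-covering of $\mathbf H$ of radius $r$ via $\gamma$ (with associated covering $\mathbf K$ via $\delta$ and centres $z\in V(G)$, $z_0\in V(K)$). For every $q\in\mathbb N$, if $r\ge q\,|V(H)|$ then the quasi-covering has at least $q$ sheets.
   Context: Graphs are simple, undirected, connected, labelled; $\mathbf H$ is finite. $B_G(v,r)$ is the ball of radius $r$, $B_G(v)=B_G(v,1)$. $\mathbf K$ is a covering of $\mathbf H$ via $\delta$ if $\delta$ is a surjective label-preserving homomorphism whose restriction to each $B_K(v)$ is a bijection onto $B_H(\delta(v))$. $\mathbf G$ is a quasi-covering of $\mathbf H$ of radius $r$ via a partial map $\gamma:V(G)\to V(H)$ if there exist a finite or infinite covering $\mathbf K$ of $\mathbf H$ via $\delta$ (the associated covering) and vertices $z_0\in V(K)$, $z\in V(G)$ (the centre) such that $B_{\mathbf G}(z,r)$ is isomorphic via some $\varphi$ to $B_{\mathbf K}(z_0,r)$, $\gamma$ is defined on $B_G(z,r)$, and $\gamma=\delta\circ\varphi$ on $V(B_G(z,r))$. It is strict if $B_{\mathbf G}(z,r-1)\neq\mathbf G$. Its number of sheets is $\min_{v\in V(H)}\left|\{w\in\delta^{-1}(v)\mid B_K(w,1)\subseteq B_K(z_0,r)\}\right|$. *)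

theory Defs
  imports Main
begin

record ('a, 'l) lgraph =
  verts :: "'a set"
  adj :: "'a \<Rightarrow> 'a \<Rightarrow> bool"
  lab :: "'a \<Rightarrow> 'l"

definition walk :: "('a, 'l) lgraph \<Rightarrow> 'a list \<Rightarrow> bool" where
  "walk G xs \<longleftrightarrow> xs \<noteq> [] \<and> set xs \<subseteq> verts G \<and>
     (\<forall>i. Suc i < length xs \<longrightarrow> adj G (xs ! i) (xs ! Suc i))"

definition reach_within :: "('a, 'l) lgraph \<Rightarrow> 'a \<Rightarrow> 'a \<Rightarrow> nat \<Rightarrow> bool" where
  "reach_within G v w n \<longleftrightarrow>
     (\<exists>xs. walk G xs \<and> hd xs = v \<and> last xs = w \<and> length xs \<le> Suc n)"

definition wf_graph :: "('a, 'l) lgraph \<Rightarrow> bool" where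
  "wf_graph G \<longleftrightarrow> verts G \<noteq> {} \<and>
     (\<forall>x y. adj G x y \<longrightarrow> x \<in> verts G \<and> y \<in> verts G) \<and>
     (\<forall>x y. adj G x y \<longrightarrow> adj G y x) \<and>
     (\<forall>x. \<not> adj G x x) \<and>
     (\<forall>x\<in>verts G. \<forall>y\<in>verts G. \<exists>n. reach_within G x y n)"

definition ball_verts :: "('a, 'l) lgraph \<Rightarrow> 'a \<Rightarrow> nat \<Rightarrow> 'a set" where
  "ball_verts G v r = {w. reach_within G v w r}"

definition ball :: "('a, 'l) lgraph \<Rightarrow> 'a \<Rightarrow> nat \<Rightarrow> ('a, 'l) lgraph" where
  "ball G v r = \<lparr> verts = ball_verts G v r,
     adj = (\<lambda>x y. x \<in> ball_verts G v r \<and> y \<in> ball_verts G v r \<and> adj G x y),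
     lab = lab G \<rparr>"

definition graph_iso :: "('a \<Rightarrow> 'b) \<Rightarrow> ('a, 'l) lgraph \<Rightarrow> ('b, 'l) lgraph \<Rightarrow> bool" where
  "graph_iso \<phi> A B \<longleftrightarrow> bij_betw \<phi> (verts A) (verts B) \<and>
     (\<forall>x\<in>verts A. \<forall>y\<in>verts A. adj A x y \<longleftrightarrow> adj B (\<phi> x) (\<phi> y)) \<and>
     (\<forall>x\<in>verts A. lab B (\<phi> x) = lab A x)"

definition covering :: "('b, 'l) lgraph \<Rightarrow> ('c, 'l) lgraph \<Rightarrow> ('b \<Rightarrow> 'c) \<Rightarrow> bool" where
  "covering K H \<delta> \<longleftrightarrow> \<delta> ` verts K = verts H \<and>
     (\<forall>x y. adj K x y \<longrightarrow> adj H (\<delta> x) (\<delta> y)) \<and>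
     (\<forall>x\<in>verts K. lab H (\<delta> x) = lab K x) \<and>
     (\<forall>v\<in>verts K. bij_betw \<delta> (ball_verts K v 1) (ball_verts H (\<delta> v) 1))"

definition quasi_covering ::
  "('a, 'l) lgraph \<Rightarrow> ('c, 'l) lgraph \<Rightarrow> nat \<Rightarrow> ('a \<Rightarrow> 'c option) \<Rightarrow>
   ('b, 'l) lgraph \<Rightarrow> ('b \<Rightarrow> 'c) \<Rightarrow> 'a \<Rightarrow> 'b \<Rightarrow> ('a \<Rightarrow> 'b) \<Rightarrow> bool" where
  "quasi_covering G H r \<gamma> K \<delta> z z0 \<phi> \<longleftrightarrow>
     wf_graph G \<and> wf_graph H \<and> finite (verts H) \<and> wf_graph K \<and> covering K H \<delta> \<and>
     z \<in> verts G \<and> z0 \<in> verts K \<and>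
     graph_iso \<phi> (ball G z r) (ball K z0 r) \<and> \<phi> z = z0 \<and>
     (\<forall>x\<in>ball_verts G z r. \<gamma> x = Some (\<delta> (\<phi> x)))"

definition strict_qc :: "('a, 'l) lgraph \<Rightarrow> 'a \<Rightarrow> nat \<Rightarrow> bool" where
  "strict_qc G z r \<longleftrightarrow> ball G z (r - 1) \<noteq> G"

definition num_sheets ::
  "('b, 'l) lgraph \<Rightarrow> ('c, 'l) lgraph \<Rightarrow> ('b \<Rightarrow> 'c) \<Rightarrow> 'b \<Rightarrow> nat \<Rightarrow> nat" where
  "num_sheets K H \<delta> z0 r =
     Min ((\<lambda>v. card {w\<in>verts K. \<delta> w = v \<and> ball_verts K w 1 \<subseteq> ball_verts K z0 r}) ` verts H)"

end

theory Submission imports Defs begin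

lemma walk_single: "walk G [x] \<longleftrightarrow> x \<in> verts G"
  by (auto simp: walk_def)

lemma walk_Cons2: "walk G (x#y#ys) \<longleftrightarrow> x \<in> verts G \<and> adj G x y \<and> walk G (y#ys)"
proof
  assume w: "walk G (x#y#ys)"
  have a: "\<forall>i. Suc i < length (x#y#ys) \<longrightarrow> adj G ((x#y#ys) ! i) ((x#y#ys) ! Suc i)"
    using w unfolding walk_def by blast
  have "adj G x y" using a[rule_format, of 0] by simp
  moreover have "\<forall>i. Suc i < length (y#ys) \<longrightarrow> adj G ((y#ys) ! i) ((y#ys) ! Suc i)"
  proof (intro allI impI)
    fix i assume "Suc i < length (y#ys)"
    then show "adj G ((y#ys) ! i) ((y#ys) ! Suc i)" using a[rule_format, of "Suc i"] by simp
  qed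
  ultimately show "x \<in> verts G \<and> adj G x y \<and> walk G (y#ys)" using w by (auto simp: walk_def)
next
  assume h: "x \<in> verts G \<and> adj G x y \<and> walk G (y#ys)"
  show "walk G (x#y#ys)" unfolding walk_def
  proof (intro conjI allI impI)
    fix i assume "Suc i < length (x#y#ys)"
    then show "adj G ((x#y#ys)!i) ((x#y#ys)!Suc i)" using h unfolding walk_def
      by (cases i) auto
  qed (use h in \<open>auto simp: walk_def\<close>)
qed

lemma walk_append: "walk G xs \<Longrightarrow> walk G ys \<Longrightarrow> last xs = hd ys \<Longrightarrow> walk G (xs @ tl ys)"
proof (induction xs)
  case Nil then show ?case by (simp add: walk_def)
next
  case (Cons x xs)
  show ?case
  proof (cases xs)
    case Nil
    then show ?thesis using Cons by (cases ys) auto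
  next
    case (Cons y zs)
    then show ?thesis using Cons.prems Cons.IH by (auto simp: walk_Cons2)
  qed
qed

lemma reach_trans:
  assumes "reach_within G a b m" "reach_within G b c n"
  shows "reach_within G a c (m + n)"
proof -
  obtain xs where xs: "walk G xs" "hd xs = a" "last xs = b" "length xs \<le> Suc m"
    using assms(1) by (auto simp: reach_within_def)
  obtain ys where ys: "walk G ys" "hd ys = b" "last ys = c" "length ys \<le> Suc n"
    using assms(2) by (auto simp: reach_within_def)
  have ne: "xs \<noteq> []" "ys \<noteq> []" using xs ys by (auto simp: walk_def)
  have "walk G (xs @ tl ys)" using walk_append[OF xs(1) ys(1)] xs ys by simp
  moreover have "hd (xs @ tl ys) = a" using ne xs by simp
  moreover have "last (xs @ tl ys) = c"
  proof (cases "tl ys = []")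
    case True
    then have "ys = [hd ys]" using ne by (cases ys) auto
    then show ?thesis using True xs ys by (metis append_Nil2 last.simps)
  next
    case False
    then show ?thesis using ys ne by (metis last_appendR last_tl)
  qed
  moreover have "length (xs @ tl ys) \<le> Suc (m + n)" using xs ys ne by simp
  ultimately show ?thesis unfolding reach_within_def by blast
qed

lemma reach_mono: "reach_within G a b m \<Longrightarrow> m \<le> n \<Longrightarrow> reach_within G a b n"
  unfolding reach_within_def by fastforce

lemma reach_verts: "reach_within G a b m \<Longrightarrow> a \<in> verts G \<and> b \<in> verts G"
  unfolding reach_within_def walk_def by (metis hd_in_set last_in_set subsetD)

lemma reach_refl: "a \<in> verts G \<Longrightarrow> reach_within G a a m"
  unfolding reach_within_def
  by (rule exI[of _ "[a]"]) (simp add: walk_single)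

lemma reach_adj: "a \<in> verts G \<Longrightarrow> b \<in> verts G \<Longrightarrow> adj G a b \<Longrightarrow> reach_within G a b 1"
  unfolding reach_within_def
  by (rule exI[of _ "[a,b]"]) (simp add: walk_Cons2 walk_single)

lemma reach_0: "reach_within G a b 0 \<Longrightarrow> b = a"
  unfolding reach_within_def walk_def by (auto simp: le_Suc_eq length_Suc_conv)

lemma reach_1: "reach_within G a b 1 \<Longrightarrow> b = a \<or> adj G a b"
proof -
  assume "reach_within G a b 1"
  then obtain xs where xs: "walk G xs" "hd xs = a" "last xs = b" "length xs \<le> 2"
    by (auto simp: reach_within_def)
  then have "xs \<noteq> []" by (auto simp: walk_def)
  then consider x where "xs = [x]" | x y where "xs = [x,y]" using xs(4)
    by (cases xs; cases "tl xs") auto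
  then show ?thesis using xs by cases (auto simp: walk_Cons2)
qed

lemma walk_snoc: "walk G (xs @ [y, w]) \<Longrightarrow> walk G (xs @ [y]) \<and> adj G y w"
proof (induction xs)
  case Nil then show ?case by (simp add: walk_Cons2 walk_single)
next
  case (Cons x xs)
  then show ?case by (cases xs) (auto simp: walk_Cons2)
qed

lemma reach_Suc: "reach_within G a w (Suc t) \<Longrightarrow> \<exists>x. reach_within G a x t \<and> reach_within G x w 1"
proof -
  assume h: "reach_within G a w (Suc t)"
  then obtain xs where xs: "walk G xs" "hd xs = a" "last xs = w" "length xs \<le> Suc (Suc t)"
    by (auto simp: reach_within_def)
  have wv: "w \<in> verts G" using reach_verts[OF h] by simp
  show ?thesis
  proof (cases "length xs \<le> Suc t")
    case True
    then have "reach_within G a w t" using xs unfolding reach_within_def by blast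
    moreover have "reach_within G w w 1" using reach_refl[OF wv] .
    ultimately show ?thesis by blast
  next
    case False
    then have "length xs \<ge> 2" by simp
    define ys where "ys = butlast (butlast xs)"
    define y where "y = last (butlast xs)"
    have ne: "xs \<noteq> []" "butlast xs \<noteq> []" proof -
      have "length (butlast xs) \<ge> 1" using \<open>length xs \<ge> 2\<close> by simp
      then have b: "butlast xs \<noteq> []" by (metis le_numeral_extra(2) list.size(3))
      then show "xs \<noteq> []" by auto
      show "butlast xs \<noteq> []" using b .
    qed
    have e1: "xs = butlast xs @ [w]" using ne xs(3) by (metis append_butlast_last_id)
    have e2: "butlast xs = ys @ [y]" using ne unfolding ys_def y_def by (metis append_butlast_last_id)
    have ys: "xs = ys @ [y, w]" using e1 e2 by simp
    then have wy: "walk G (ys @ [y])" "adj G y w" using walk_snoc[of G ys y w] xs(1) by simp_all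
    have yv: "y \<in> verts G" using wy(1) by (auto simp: walk_def)
    have "hd (ys @ [y]) = a" using xs(2) ys by (cases ys) auto
    moreover have "length (ys @ [y]) \<le> Suc t" using xs(4) ys by simp
    ultimately have "reach_within G a y t" using wy(1) unfolding reach_within_def by (intro exI[of _ "ys @ [y]"]) simp
    moreover have "reach_within G y w 1" using reach_adj[OF yv wv wy(2)] .
    ultimately show ?thesis by blast
  qed
qed


lemma exit_lemma: "reach_within G z x m \<Longrightarrow> \<not> reach_within G z x i \<Longrightarrow>
  \<exists>y. reach_within G z y (Suc i) \<and> \<not> reach_within G z y i"
proof (induction m arbitrary: x)
  case 0
  have "x = z" using reach_0[OF 0(1)] by simp
  moreover have "z \<in> verts G" using reach_verts[OF 0(1)] by simp
  ultimately have "reach_within G z x i" using reach_refl[of z G i] by simp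
  then show ?case using 0(2) by simp
next
  case (Suc m)
  obtain p where p: "reach_within G z p m" "reach_within G p x 1" using reach_Suc[OF Suc(2)] by blast
  show ?case
  proof (cases "reach_within G z p i")
    case True
    then have "reach_within G z x (Suc i)" using reach_trans[OF True p(2)] by simp
    then show ?thesis using Suc(3) by blast
  next
    case False
    then show ?thesis using Suc.IH[OF p(1)] by blast
  qed
qed

lemma ball_verts_sub: "ball_verts G z n \<subseteq> verts G"
  unfolding ball_verts_def by (auto dest: reach_verts)

lemma ball_verts_mono: assumes "m \<le> n" shows "ball_verts G z m \<subseteq> ball_verts G z n"
proof
  fix w assume "w \<in> ball_verts G z m"
  then have "reach_within G z w m" unfolding ball_verts_def by simp
  from reach_mono[OF this assms] show "w \<in> ball_verts G z n" unfolding ball_verts_def by simp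
qed

lemma ball_verts_0: "z \<in> verts G \<Longrightarrow> ball_verts G z 0 = {z}"
  unfolding ball_verts_def by (auto dest: reach_0 intro: reach_refl)

lemma card_growth:
  assumes "z \<in> verts G" "finite (ball_verts G z d)"
    "\<forall>i<d. \<exists>y. reach_within G z y (Suc i) \<and> \<not> reach_within G z y i"
  shows "Suc d \<le> card (ball_verts G z d)"
  using assms(2,3)
proof (induction d)
  case 0
  then show ?case using ball_verts_0[OF assms(1)] by simp
next
  case (Suc d)
  have sub: "ball_verts G z d \<subseteq> ball_verts G z (Suc d)" by (rule ball_verts_mono) simp
  have fin: "finite (ball_verts G z d)" using Suc.prems(1) sub finite_subset by blast
  obtain y where "reach_within G z y (Suc d)" "\<not> reach_within G z y d" using Suc.prems(2) by blast
  then have "ball_verts G z d \<subset> ball_verts G z (Suc d)" using sub unfolding ball_verts_def by blast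
  then have "card (ball_verts G z d) < card (ball_verts G z (Suc d))"
    using Suc.prems(1) psubset_card_mono by blast
  moreover have "Suc d \<le> card (ball_verts G z d)" using Suc.IH fin Suc.prems(2) by simp
  ultimately show ?case by simp
qed

lemma cov_ball1_finite:
  assumes "covering K H \<delta>" "finite (verts H)" "x \<in> verts K"
  shows "finite (ball_verts K x 1)"
proof -
  have b: "bij_betw \<delta> (ball_verts K x 1) (ball_verts H (\<delta> x) 1)" using assms unfolding covering_def by blast
  have "ball_verts H (\<delta> x) 1 \<subseteq> verts H" by (rule ball_verts_sub)
  then have "finite (ball_verts H (\<delta> x) 1)" using assms(2) by (rule finite_subset)
  then show ?thesis using bij_betw_finite[OF b] by simp
qed

lemma cov_ball_finite:
  assumes "covering K H \<delta>" "finite (verts H)" "z0 \<in> verts K"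
  shows "finite (ball_verts K z0 t)"
proof (induction t)
  case 0 then show ?case using ball_verts_0[OF assms(3)] by simp
next
  case (Suc t)
  have sub: "ball_verts K z0 (Suc t) \<subseteq> (\<Union>x\<in>ball_verts K z0 t. ball_verts K x 1)"
  proof
    fix w assume "w \<in> ball_verts K z0 (Suc t)"
    then have "reach_within K z0 w (Suc t)" unfolding ball_verts_def by simp
    from reach_Suc[OF this] obtain x where "reach_within K z0 x t" "reach_within K x w 1" by blast
    then show "w \<in> (\<Union>x\<in>ball_verts K z0 t. ball_verts K x 1)" unfolding ball_verts_def by blast
  qed
  have "\<And>x. x \<in> ball_verts K z0 t \<Longrightarrow> finite (ball_verts K x 1)"
  proof -
    fix x assume "x \<in> ball_verts K z0 t"
    then have "x \<in> verts K" using ball_verts_sub[of K z0 t] by blast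
    then show "finite (ball_verts K x 1)" by (rule cov_ball1_finite[OF assms(1,2)])
  qed
  then have "finite (\<Union>x\<in>ball_verts K z0 t. ball_verts K x 1)" using Suc.IH by simp
  then show ?case using sub by (rule finite_subset[rotated])
qed

definition fib :: "('b, 'l) lgraph \<Rightarrow> ('b \<Rightarrow> 'c) \<Rightarrow> 'b \<Rightarrow> 'c \<Rightarrow> nat \<Rightarrow> 'b set" where
  "fib K \<delta> z0 v s = {w. \<delta> w = v \<and> w \<in> ball_verts K z0 s}"

lemma fib_finite:
  assumes "covering K H \<delta>" "finite (verts H)" "z0 \<in> verts K"
  shows "finite (fib K \<delta> z0 v s)"
  using cov_ball_finite[OF assms, of s] unfolding fib_def by (rule rev_finite_subset) auto

lemma fib_mono_card:
  assumes "covering K H \<delta>" "finite (verts H)" "z0 \<in> verts K" "s \<le> s'"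
  shows "card (fib K \<delta> z0 v s) \<le> card (fib K \<delta> z0 v s')"
  apply (rule card_mono[OF fib_finite[OF assms(1-3)]])
  using ball_verts_mono[OF assms(4), of K z0] unfolding fib_def by blast

lemma edge_step:
  assumes cov: "covering K H \<delta>" and fin: "finite (verts H)" and z0: "z0 \<in> verts K"
    and wK: "wf_graph K" and wH: "wf_graph H" and ab: "adj H a b"
  shows "card (fib K \<delta> z0 a s) \<le> card (fib K \<delta> z0 b (Suc s))"
proof -
  define f where "f x = the_inv_into (ball_verts K x 1) \<delta> b" for x
  have bij: "\<And>x. x \<in> verts K \<Longrightarrow> bij_betw \<delta> (ball_verts K x 1) (ball_verts H (\<delta> x) 1)"
    using cov unfolding covering_def by blast
  have aneqb: "a \<noteq> b" using wH ab unfolding wf_graph_def by blast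
  have Ksym: "\<And>u v. adj K u v \<Longrightarrow> adj K v u" using wK unfolding wf_graph_def by blast
  have Kv: "\<And>u v. adj K u v \<Longrightarrow> u \<in> verts K \<and> v \<in> verts K" using wK unfolding wf_graph_def by blast
  have abv: "a \<in> verts H" "b \<in> verts H" using wH ab unfolding wf_graph_def by blast+
  have fx: "f x \<in> ball_verts K x 1 \<and> \<delta> (f x) = b" if x: "x \<in> fib K \<delta> z0 a s" for x
  proof -
    have xv: "x \<in> verts K" "\<delta> x = a" using x ball_verts_sub[of K z0 s] unfolding fib_def by blast+
    have bB: "b \<in> ball_verts H (\<delta> x) 1" using reach_adj[OF abv ab] xv(2) unfolding ball_verts_def by simp
    have bx: "bij_betw \<delta> (ball_verts K x 1) (ball_verts H (\<delta> x) 1)" using bij[OF xv(1)] .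
    have "\<delta> (f x) = b" unfolding f_def using f_the_inv_into_f_bij_betw[OF bx bB] .
    moreover have "f x \<in> ball_verts K x 1" unfolding f_def
      using the_inv_into_into[of \<delta> "ball_verts K x 1" b "ball_verts K x 1"] bx bB
      unfolding bij_betw_def by simp
    ultimately show ?thesis by simp
  qed
  have adjf: "adj K x (f x)" if x: "x \<in> fib K \<delta> z0 a s" for x
  proof -
    have "reach_within K x (f x) 1" using fx[OF x] unfolding ball_verts_def by simp
    then have "f x = x \<or> adj K x (f x)" by (rule reach_1)
    moreover have "\<delta> x = a" using x unfolding fib_def by blast
    ultimately show ?thesis using fx[OF x] aneqb by auto
  qed
  have "inj_on f (fib K \<delta> z0 a s)"
  proof (rule inj_onI)
    fix x x' assume x: "x \<in> fib K \<delta> z0 a s" and x': "x' \<in> fib K \<delta> z0 a s" and eq: "f x = f x'"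
    let ?y = "f x"
    have yv: "?y \<in> verts K" using Kv[OF adjf[OF x]] by simp
    have a1: "adj K ?y x" using Ksym[OF adjf[OF x]] .
    have a2: "adj K ?y x'" using Ksym[OF adjf[OF x']] eq by simp
    have "x \<in> ball_verts K ?y 1" using reach_adj[OF yv _ a1] Kv[OF a1] unfolding ball_verts_def by simp
    moreover have "x' \<in> ball_verts K ?y 1" using reach_adj[OF yv _ a2] Kv[OF a2] unfolding ball_verts_def by simp
    moreover have "\<delta> x = \<delta> x'" using x x' unfolding fib_def by simp
    moreover have "inj_on \<delta> (ball_verts K ?y 1)" using bij[OF yv] unfolding bij_betw_def by simp
    ultimately show "x = x'" unfolding inj_on_def by blast
  qed
  moreover have "f ` fib K \<delta> z0 a s \<subseteq> fib K \<delta> z0 b (Suc s)"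
  proof
    fix w assume "w \<in> f ` fib K \<delta> z0 a s"
    then obtain x where x: "x \<in> fib K \<delta> z0 a s" and w: "w = f x" by blast
    have "reach_within K z0 x s" using x unfolding fib_def ball_verts_def by blast
    moreover have "reach_within K x w 1" using fx[OF x] w unfolding ball_verts_def by blast
    ultimately have "reach_within K z0 w (Suc s)" using reach_trans[of K z0 x s w 1] by simp
    then show "w \<in> fib K \<delta> z0 b (Suc s)" using fx[OF x] w unfolding fib_def ball_verts_def by blast
  qed
  ultimately show ?thesis using card_inj_on_le fib_finite[OF cov fin z0] by blast
qed

lemma walk_step:
  assumes cov: "covering K H \<delta>" and fin: "finite (verts H)" and z0: "z0 \<in> verts K"
    and wK: "wf_graph K" and wH: "wf_graph H"
  shows "walk H xs \<Longrightarrow> card (fib K \<delta> z0 (hd xs) s) \<le> card (fib K \<delta> z0 (last xs) (s + length xs - 1))"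
proof (induction xs arbitrary: s)
  case Nil then show ?case by (simp add: walk_def)
next
  case (Cons x xs)
  show ?case
  proof (cases xs)
    case Nil then show ?thesis by simp
  next
    case (Cons y ys)
    then have "adj H x y" "walk H xs" using Cons.prems by (auto simp: walk_Cons2)
    then have "card (fib K \<delta> z0 x s) \<le> card (fib K \<delta> z0 y (Suc s))"
      using edge_step[OF cov fin z0 wK wH] by blast
    also have "\<dots> \<le> card (fib K \<delta> z0 (last xs) (Suc s + length xs - 1))"
      using Cons.IH[OF \<open>walk H xs\<close>, of "Suc s"] Cons by simp
    finally show ?thesis using Cons by simp
  qed
qed


theorem mainTheorem13:
  fixes G :: "('a, 'l) lgraph" and H :: "('c, 'l) lgraph" and K :: "('b, 'l) lgraph"
    and \<gamma> :: "'a \<Rightarrow> 'c option" and \<delta> :: "'b \<Rightarrow> 'c" and \<phi> :: "'a \<Rightarrow> 'b"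
    and z :: 'a and z0 :: 'b and r q :: nat
  assumes "quasi_covering G H r \<gamma> K \<delta> z z0 \<phi>"
    and "strict_qc G z r"
    and "r \<ge> q * card (verts H)"
  shows "q \<le> num_sheets K H \<delta> z0 r"
proof (cases "q = 0")
  case True then show ?thesis by simp
next
  case False
  note qc = assms(1)[unfolded quasi_covering_def]
  have wG: "wf_graph G" and wH: "wf_graph H" and finH: "finite (verts H)" and wK: "wf_graph K"
    and cov: "covering K H \<delta>" and zG: "z \<in> verts G" and z0K: "z0 \<in> verts K"
    and iso: "graph_iso \<phi> (ball G z r) (ball K z0 r)" and phiz: "\<phi> z = z0"
    using qc by auto
  define n where "n = card (verts H)"
  have Hne: "verts H \<noteq> {}" using wH unfolding wf_graph_def by blast
  then have n1: "n \<ge> 1" using finH unfolding n_def by (simp add: Suc_leI card_gt_0_iff)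
  have "n \<le> q * n" using False by simp
  then have rn: "r \<ge> n" using assms(3) unfolding n_def by linarith
  define t where "t = r - n"
  obtain x where xG: "x \<in> verts G" and xout: "\<not> reach_within G z x (r - 1)"
  proof -
    have "\<exists>x\<in>verts G. x \<notin> ball_verts G z (r - 1)"
    proof (rule ccontr)
      assume "\<not> ?thesis"
      then have sub: "verts G \<subseteq> ball_verts G z (r - 1)" by blast
      have sub2: "ball_verts G z (r - 1) \<subseteq> verts G" by (rule ball_verts_sub)
      have "ball G z (r - 1) = G"
        using sub sub2 wG unfolding ball_def wf_graph_def
        by (cases G) (auto simp: fun_eq_iff)
      then show False using assms(2) unfolding strict_qc_def by simp
    qed
    then show ?thesis using that unfolding ball_verts_def by blast
  qed
  obtain m where "reach_within G z x m" using wG zG xG unfolding wf_graph_def by blast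
  have growG: "\<forall>i<t. \<exists>y. reach_within G z y (Suc i) \<and> \<not> reach_within G z y i"
  proof (intro allI impI)
    fix i assume "i < t"
    then have "i \<le> r - 1" unfolding t_def using n1 by simp
    then have nri: "\<not> reach_within G z x i" using xout reach_mono[of G z x i "r-1"] by blast
    show "\<exists>y. reach_within G z y (Suc i) \<and> \<not> reach_within G z y i"
      using exit_lemma[OF \<open>reach_within G z x m\<close> nri] .
  qed
  have bijphi: "bij_betw \<phi> (ball_verts G z r) (ball_verts K z0 r)"
    using iso unfolding graph_iso_def ball_def by simp
  have finKr: "finite (ball_verts K z0 r)" using cov_ball_finite[OF cov finH z0K] .
  have finGr: "finite (ball_verts G z r)" using bij_betw_finite[OF bijphi] finKr by simp
  have tr: "t \<le> r" unfolding t_def by simp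
  have subGt: "ball_verts G z t \<subseteq> ball_verts G z r" using ball_verts_mono[OF tr] .
  have finGt: "finite (ball_verts G z t)" by (rule finite_subset[OF subGt finGr])
  have cardG: "Suc t \<le> card (ball_verts G z t)" using card_growth[OF zG finGt growG] .
  have transfer: "\<forall>w. reach_within G z w s \<longrightarrow> reach_within K z0 (\<phi> w) s" if "s \<le> r" for s
    using that
  proof (induction s)
    case 0
    show ?case
    proof (intro allI impI)
      fix w assume "reach_within G z w 0"
      then have "w = z" by (rule reach_0)
      then show "reach_within K z0 (\<phi> w) 0" using phiz reach_refl[OF z0K] by simp
    qed
  next
    case (Suc s)
    show ?case
    proof (intro allI impI)
      fix w assume w: "reach_within G z w (Suc s)"
      obtain p where p: "reach_within G z p s" "reach_within G p w 1" using reach_Suc[OF w] by blast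
      have IH: "reach_within K z0 (\<phi> p) s" using Suc p by simp
      have pr: "p \<in> ball_verts G z r" using reach_mono[OF p(1), of r] Suc.prems unfolding ball_verts_def by simp
      have wr: "w \<in> ball_verts G z r" using reach_mono[OF w, of r] Suc.prems unfolding ball_verts_def by simp
      consider "w = p" | "adj G p w" using reach_1[OF p(2)] by blast
      then show "reach_within K z0 (\<phi> w) (Suc s)"
      proof cases
        case 1 then show ?thesis using reach_mono[OF IH, of "Suc s"] by simp
      next
        case 2
        have "adj (ball G z r) p w" using pr wr 2 unfolding ball_def by simp
        then have "adj (ball K z0 r) (\<phi> p) (\<phi> w)" using iso pr wr unfolding graph_iso_def ball_def by simp
        then have a: "adj K (\<phi> p) (\<phi> w)" unfolding ball_def by simp
        have "\<phi> p \<in> verts K \<and> \<phi> w \<in> verts K" using wK a unfolding wf_graph_def by blast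
        then have r1: "reach_within K (\<phi> p) (\<phi> w) 1" using reach_adj[OF _ _ a] by simp
        show ?thesis using reach_trans[OF IH r1] by simp
      qed
    qed
  qed
  have imgsub: "\<phi> ` ball_verts G z t \<subseteq> ball_verts K z0 t"
  proof
    fix y assume "y \<in> \<phi> ` ball_verts G z t"
    then obtain w where w: "w \<in> ball_verts G z t" "y = \<phi> w" by blast
    then have "reach_within G z w t" unfolding ball_verts_def by simp
    then have "reach_within K z0 (\<phi> w) t" using transfer[OF tr] by simp
    then show "y \<in> ball_verts K z0 t" using w unfolding ball_verts_def by simp
  qed
  have finKt: "finite (ball_verts K z0 t)" using cov_ball_finite[OF cov finH z0K] .
  have "card (ball_verts G z t) = card (\<phi> ` ball_verts G z t)"
  proof -
    have "inj_on \<phi> (ball_verts G z r)" using bijphi unfolding bij_betw_def by simp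
    then have "inj_on \<phi> (ball_verts G z t)" using inj_on_subset subGt by blast
    then show ?thesis by (simp add: card_image)
  qed
  also have "\<dots> \<le> card (ball_verts K z0 t)" using card_mono[OF finKt imgsub] .
  finally have cardKt: "Suc t \<le> card (ball_verts K z0 t)" using cardG by simp
  \<comment> \<open>pigeonhole\<close>
  define c where "c u = card (fib K \<delta> z0 u t)" for u
  define M where "M = Max (c ` verts H)"
  have "M \<in> c ` verts H" unfolding M_def using finH Hne by (intro Max_in) auto
  then obtain u0 where u0: "u0 \<in> verts H" "c u0 = M" by (metis imageE)
  have cle: "c u \<le> M" if "u \<in> verts H" for u using finH that unfolding M_def by simp
  have "ball_verts K z0 t \<subseteq> (\<Union>u\<in>verts H. fib K \<delta> z0 u t)"
  proof
    fix w assume wt: "w \<in> ball_verts K z0 t"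
    then have "w \<in> verts K" using ball_verts_sub[of K z0 t] by blast
    moreover have "\<delta> ` verts K = verts H" using cov unfolding covering_def by simp
    ultimately have "\<delta> w \<in> verts H" by blast
    with wt show "w \<in> (\<Union>u\<in>verts H. fib K \<delta> z0 u t)" unfolding fib_def by blast
  qed
  then have "card (ball_verts K z0 t) \<le> card (\<Union>u\<in>verts H. fib K \<delta> z0 u t)"
    using finH fib_finite[OF cov finH z0K] by (intro card_mono) auto
  also have "\<dots> \<le> (\<Sum>u\<in>verts H. c u)" unfolding c_def using card_UN_le[OF finH, of "\<lambda>u. fib K \<delta> z0 u t"] by simp
  also have "\<dots> \<le> n * M" using sum_bounded_above[of "verts H" c M] cle unfolding n_def by simp
  finally have tM: "Suc t \<le> n * M" using cardKt by simp
  have reachH: "reach_within H u0 v (n - 1)" if v: "v \<in> verts H" for v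
  proof (rule ccontr)
    assume nr: "\<not> reach_within H u0 v (n - 1)"
    obtain m' where m': "reach_within H u0 v m'" using wH u0(1) v unfolding wf_graph_def by blast
    have grow: "\<forall>i<n - 1. \<exists>y. reach_within H u0 y (Suc i) \<and> \<not> reach_within H u0 y i"
    proof (intro allI impI)
      fix i assume "i < n - 1"
      then have "i \<le> n - 1" by simp
      then have nri: "\<not> reach_within H u0 v i" using nr reach_mono[of H u0 v i "n-1"] by blast
      show "\<exists>y. reach_within H u0 y (Suc i) \<and> \<not> reach_within H u0 y i"
        using exit_lemma[OF m' nri] .
    qed
    have subH: "ball_verts H u0 (n - 1) \<subseteq> verts H" by (rule ball_verts_sub)
    have finB: "finite (ball_verts H u0 (n - 1))" by (rule finite_subset[OF subH finH])
    have "Suc (n - 1) \<le> card (ball_verts H u0 (n - 1))" using card_growth[OF u0(1) finB grow] .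
    moreover have "ball_verts H u0 (n - 1) \<subset> verts H" using subH v nr unfolding ball_verts_def by blast
    then have "card (ball_verts H u0 (n - 1)) < n" using psubset_card_mono[OF finH] unfolding n_def by blast
    ultimately show False using n1 by simp
  qed
  have fibv: "q \<le> card (fib K \<delta> z0 v (r - 1))" if v: "v \<in> verts H" for v
  proof -
    obtain xs where xs: "walk H xs" "hd xs = u0" "last xs = v" "length xs \<le> n"
      using reachH[OF v] n1 unfolding reach_within_def by auto
    have "M \<le> card (fib K \<delta> z0 v (t + length xs - 1))"
      using walk_step[OF cov finH z0K wK wH xs(1), of t] xs u0 unfolding c_def by simp
    also have "\<dots> \<le> card (fib K \<delta> z0 v (r - 1))"
      using fib_mono_card[OF cov finH z0K] xs(4) rn unfolding t_def by simp
    finally have Mc: "M \<le> card (fib K \<delta> z0 v (r - 1))" .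
    define cv where "cv = card (fib K \<delta> z0 v (r - 1))"
    have "n * M \<le> n * cv" using Mc unfolding cv_def by simp
    then have "Suc t \<le> n * cv" using tM by linarith
    then have "r + 1 \<le> n * cv + n" using rn unfolding t_def by simp
    moreover have "q * n \<le> r" using assms(3) unfolding n_def .
    ultimately have "n * q < n * (cv + 1)" by (simp add: algebra_simps)
    then have "q < cv + 1" using n1 nat_mult_less_cancel1[of n q "cv + 1"] by simp
    then show ?thesis unfolding cv_def by simp
  qed
  have r1: "r \<ge> 1" using rn n1 by simp
  have "q \<le> card {w\<in>verts K. \<delta> w = v \<and> ball_verts K w 1 \<subseteq> ball_verts K z0 r}"
    if v: "v \<in> verts H" for v
  proof -
    have sub: "fib K \<delta> z0 v (r - 1) \<subseteq> {w\<in>verts K. \<delta> w = v \<and> ball_verts K w 1 \<subseteq> ball_verts K z0 r}"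
    proof
      fix w assume w: "w \<in> fib K \<delta> z0 v (r - 1)"
      then have rw: "reach_within K z0 w (r - 1)" and dw: "\<delta> w = v" unfolding fib_def ball_verts_def by auto
      have "ball_verts K w 1 \<subseteq> ball_verts K z0 r"
      proof
        fix y assume "y \<in> ball_verts K w 1"
        then have "reach_within K w y 1" unfolding ball_verts_def by simp
        from reach_trans[OF rw this] r1 show "y \<in> ball_verts K z0 r" unfolding ball_verts_def by simp
      qed
      then show "w \<in> {w\<in>verts K. \<delta> w = v \<and> ball_verts K w 1 \<subseteq> ball_verts K z0 r}"
        using dw reach_verts[OF rw] by blast
    qed
    have fin: "finite {w\<in>verts K. \<delta> w = v \<and> ball_verts K w 1 \<subseteq> ball_verts K z0 r}"
    proof (rule rev_finite_subset[OF finKr])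
      show "{w\<in>verts K. \<delta> w = v \<and> ball_verts K w 1 \<subseteq> ball_verts K z0 r} \<subseteq> ball_verts K z0 r"
      proof
        fix w assume "w \<in> {w\<in>verts K. \<delta> w = v \<and> ball_verts K w 1 \<subseteq> ball_verts K z0 r}"
        then have "w \<in> verts K" "ball_verts K w 1 \<subseteq> ball_verts K z0 r" by auto
        moreover have "w \<in> ball_verts K w 1" using reach_refl[OF \<open>w \<in> verts K\<close>] unfolding ball_verts_def by simp
        ultimately show "w \<in> ball_verts K z0 r" by blast
      qed
    qed
    show ?thesis using fibv[OF v] card_mono[OF fin sub] by simp
  qed
  then show ?thesis unfolding num_sheets_def using finH Hne by (subst Min_ge_iff) auto
qed

end
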